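(* For every Minkowski space $X$ of dimension at least $3$, $m(X)\geq 4$.
   Context: A Minkowski space is a finite-dimensional real normed space $(X,\|\cdot\|)$. For a set $S\subseteq X$, its midpoint set is $M(S)=\{\tfrac12(x+y): x,y\in S,\ x\neq y\}$. A set $S\subseteq X$ is an M-set if every vector in $M(S)$ has norm exactly $1$ and every vector in $S$ has norm strictly greater than $1$. $m(X)$ denotes the largest cardinality of an M-set in $X$ if such a largest finite cardinality exists, and $m(X)=\infty$ otherwise. *)

theory Defs
  imports "HOL-Analysis.Analysis" "HOL-Library.Extended_Nat"
begin

text \<open>A Minkowski space is modelled as a type of class real_normed_vector that is
  finite-dimensional (spanned by a finite set).\<close>

definition midpoint_set :: "'a::real_vector set \<Rightarrow> 'a set" where
  "midpoint_set S = {(1/2) *\<^sub>R (x + y) | x y. x \<in> S \<and> y \<in> S \<and> x \<noteq> y}"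

definition is_M_set :: "'a::real_normed_vector set \<Rightarrow> bool" where
  "is_M_set S \<longleftrightarrow> (\<forall>v \<in> midpoint_set S. norm v = 1) \<and> (\<forall>x \<in> S. norm x > 1)"

definition m_const :: "'a::real_normed_vector itself \<Rightarrow> enat" where
  "m_const (_ :: 'a itself) = Sup {enat (card S) | S :: 'a set. finite S \<and> is_M_set S}"

end

theory Submission
  imports Defs
begin

lemma exposed:
  fixes L :: "'e::euclidean_space \<Rightarrow> 'a::real_normed_vector"
  assumes lin: "linear L" and inj: "inj L"
  obtains c where "norm (L c) = 1" "\<And>p. inner p c = 0 \<Longrightarrow> p \<noteq> 0 \<Longrightarrow> norm (L (c+p)) > 1"
proof -
  have cont: "continuous_on UNIV (\<lambda>x. norm (L x))"
    using lin by (intro continuous_intros) (simp add: linear_conv_bounded_linear linear_continuous_on)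
  have L0: "L x = 0 \<longleftrightarrow> x = 0" for x
    using inj lin by (metis injD linear_0)
  have Lsc: "norm (L (t *\<^sub>R x)) = \<bar>t\<bar> * norm (L x)" for t x
    using lin by (simp add: linear_scale)
  obtain s where s: "s \<in> sphere 0 1" "\<And>y. y \<in> sphere 0 1 \<Longrightarrow> norm (L s) \<le> norm (L y)"
  proof -
    have "\<exists>x\<in>sphere (0::'e) 1. \<forall>y\<in>sphere 0 1. norm (L x) \<le> norm (L y)"
      by (rule continuous_attains_inf) (auto intro: continuous_on_subset[OF cont])
    then show ?thesis using that by blast
  qed
  define m where "m = norm (L s)"
  have mpos: "m > 0" using s(1) L0 unfolding m_def by fastforce
  have below: "m * norm x \<le> norm (L x)" for x
  proof (cases "x = 0")
    case True then show ?thesis by (simp add: L0)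
  next
    case False
    have "m \<le> norm (L ((1/norm x) *\<^sub>R x))" unfolding m_def using False by (intro s(2)) simp
    also have "\<dots> = norm (L x) / norm x" by (simp add: Lsc)
    finally show ?thesis using False by (simp add: field_simps)
  qed
  define K where "K = {x. norm (L x) \<le> 1}"
  have "bounded K" unfolding K_def bounded_iff
    by (rule exI[of _ "1/m"]) (use below mpos in \<open>auto simp: field_simps intro: order_trans\<close>)
  moreover have "closed K" unfolding K_def
    by (rule closed_Collect_le) (use cont in auto)
  ultimately have cK: "compact K" by (simp add: compact_eq_bounded_closed)
  have "(0::'e) \<in> K" unfolding K_def using linear_0[OF lin] by simp
  hence "K \<noteq> {}" by blast
  with cK obtain c where c: "c \<in> K" "\<And>y. y \<in> K \<Longrightarrow> norm y \<le> norm c"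
    using continuous_attains_sup[of K norm] by (auto intro: continuous_intros)
  obtain e :: 'e where e: "e \<noteq> 0" using nonzero_Basis by blast
  have "norm (L e) > 0" using e L0 by simp
  then have "(1/norm (L e)) *\<^sub>R e \<in> K" unfolding K_def by (simp add: Lsc)
  then have "norm ((1/norm (L e)) *\<^sub>R e) \<le> norm c" by (rule c(2))
  moreover have "norm ((1/norm (L e)) *\<^sub>R e) > 0" using e \<open>norm (L e) > 0\<close> by simp
  ultimately have "c \<noteq> 0" by auto
  then have Lcpos: "norm (L c) > 0" using L0 by simp
  have Lc1: "norm (L c) = 1"
  proof (rule ccontr)
    assume "norm (L c) \<noteq> 1"
    then have lt: "norm (L c) < 1" using c(1) unfolding K_def by auto
    have "(1/norm (L c)) *\<^sub>R c \<in> K" unfolding K_def using Lcpos by (simp add: Lsc)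
    then have "norm ((1/norm (L c)) *\<^sub>R c) \<le> norm c" by (rule c(2))
    then have "norm c / norm (L c) \<le> norm c" by simp
    then have "norm c \<le> norm c * norm (L c)" using Lcpos by (simp add: field_simps)
    then show False using lt \<open>c \<noteq> 0\<close> by (simp add: mult_le_cancel_left1)
  qed
  show ?thesis
  proof (rule that[OF Lc1])
    fix p assume p: "inner p c = 0" "p \<noteq> 0"
    show "norm (L (c+p)) > 1"
    proof (rule ccontr)
      assume "\<not> norm (L (c+p)) > 1"
      then have "c + p \<in> K" unfolding K_def by simp
      then have "norm (c+p) \<le> norm c" by (rule c(2))
      moreover have "(norm (c+p))\<^sup>2 = (norm c)\<^sup>2 + (norm p)\<^sup>2"
        by (rule norm_add_Pythagorean) (metis orthogonal_def inner_commute p(1))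
      ultimately show False using p(2)
        by (smt (verit) norm_ge_zero power_mono zero_less_norm_iff zero_less_power)
    qed
  qed
qed

lemma main3:
  fixes L :: "real^3 \<Rightarrow> 'a::real_normed_vector"
  assumes lin: "linear L" and inj: "inj L"
  shows "m_const TYPE('a) \<ge> 4"
proof -
  have L0: "L x = 0 \<longleftrightarrow> x = 0" for x
    using inj lin by (metis injD linear_0)
  have Lsc: "norm (L (t *\<^sub>R x)) = \<bar>t\<bar> * norm (L x)" for t x
    using lin by (simp add: linear_scale)
  obtain c where c1: "norm (L c) = 1" and cp: "\<And>p. inner p c = 0 \<Longrightarrow> p \<noteq> 0 \<Longrightarrow> norm (L (c+p)) > 1"
    using exposed[OF lin inj] by blast
  have "c \<noteq> 0" using c1 linear_0[OF lin] by auto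
  obtain a0 :: "real^3" where a0: "a0 \<noteq> 0" "orthogonal c a0"
    using orthogonal_to_vector_exists[of c] by auto
  have "dim {c, a0} \<le> card {c, a0}" by (rule dim_le_card) (auto intro: span_base)
  also have "\<dots> \<le> 2" by (simp add: card_insert_le_m1)
  finally have "dim {c, a0} < DIM(real^3)" by simp
  then obtain b0 :: "real^3" where b0: "b0 \<noteq> 0" "\<And>y. y \<in> span {c,a0} \<Longrightarrow> orthogonal b0 y"
    using orthogonal_to_subspace_exists by blast
  have b0c: "inner b0 c = 0" and b0a: "inner b0 a0 = 0"
    using b0(2)[of c] b0(2)[of a0] by (auto simp: span_base orthogonal_def)
  define u where "u = (1 / norm (L a0)) *\<^sub>R a0"
  define v where "v = (1 / norm (L b0)) *\<^sub>R b0"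
  have u1: "norm (L u) = 1" unfolding u_def using a0 L0 by (simp add: Lsc)
  have v1: "norm (L v) = 1" unfolding v_def using b0 L0 by (simp add: Lsc)
  have "u \<noteq> 0" unfolding u_def using a0 L0 by simp
  have "v \<noteq> 0" unfolding v_def using b0 L0 by simp
  have uc: "inner u c = 0" unfolding u_def using a0(2) by (simp add: orthogonal_def inner_commute)
  have vc: "inner v c = 0" unfolding v_def using b0c by simp
  have uv: "inner u v = 0" unfolding u_def v_def using b0a by (simp add: inner_commute)
  have cc: "inner c c > 0" using \<open>c \<noteq> 0\<close> by simp
  have uu: "inner u u > 0" using \<open>u \<noteq> 0\<close> by simp
  have vv: "inner v v > 0" using \<open>v \<noteq> 0\<close> by simp
  define P1 where "P1 = u + v + c"
  define P2 where "P2 = u - v - c"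
  define P3 where "P3 = - u + v - c"
  define P4 where "P4 = - u - v + c"
  have Lneg: "norm (L (- x)) = norm (L x)" for x using lin by (simp add: linear_neg)
  have iuv: "inner (u+v) u > 0" "inner (v-u) u < 0" "inner (u-v) u > 0" "inner (-(u+v)) u < 0"
    using uu uv inner_commute[of v u] by (auto simp: inner_add_left inner_diff_left)
  have nz: "u+v \<noteq> 0" "v-u \<noteq> 0" "u-v \<noteq> 0" "-(u+v) \<noteq> 0"
    using iuv by (metis inner_zero_left less_irrefl)+
  have n1: "norm (L P1) > 1" unfolding P1_def
    using cp[of "u+v"] uc vc nz by (auto simp: inner_add_left add.commute)
  have n2: "norm (L P2) > 1"
  proof -
    have "P2 = - (c + (v - u))" unfolding P2_def by (simp add: algebra_simps)
    moreover have "norm (L (c + (v - u))) > 1"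
      using cp[of "v-u"] uc vc nz by (auto simp: inner_diff_left)
    ultimately show ?thesis using Lneg by metis
  qed
  have n3: "norm (L P3) > 1"
  proof -
    have "P3 = - (c + (u - v))" unfolding P3_def by (simp add: algebra_simps)
    moreover have "norm (L (c + (u - v))) > 1"
      using cp[of "u-v"] uc vc nz by (auto simp: inner_diff_left)
    ultimately show ?thesis using Lneg by metis
  qed
  have n4: "norm (L P4) > 1"
  proof -
    have "P4 = c + (- (u + v))" unfolding P4_def by (simp add: algebra_simps)
    moreover have "norm (L (c + (- (u + v)))) > 1"
      using cp[of "- (u+v)"] uc vc nz by (auto simp: inner_diff_left)
    ultimately show ?thesis by metis
  qed
  have ic: "inner P1 c > 0" "inner P4 c > 0" "inner P2 c < 0" "inner P3 c < 0"
    unfolding P1_def P2_def P3_def P4_def using uc vc cc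
    by (auto simp: inner_add_left inner_diff_left)
  have iu: "inner P1 u > 0" "inner P4 u < 0" "inner P2 u > 0" "inner P3 u < 0"
    unfolding P1_def P2_def P3_def P4_def using uc vc uu uv inner_commute[of v u] inner_commute[of c u]
    by (auto simp: inner_add_left inner_diff_left)
  have dist: "P1 \<noteq> P2" "P1 \<noteq> P3" "P1 \<noteq> P4" "P2 \<noteq> P3" "P2 \<noteq> P4" "P3 \<noteq> P4"
    using ic iu by auto
  define S where "S = L ` {P1, P2, P3, P4}"
  have cardS: "card S = 4" unfolding S_def
    using dist inj by (simp add: inj_eq)
  have mid: "(1/2) *\<^sub>R (x + y) \<in> {u, -u, v, -v, c, -c}"
    if "x \<in> {P1,P2,P3,P4}" "y \<in> {P1,P2,P3,P4}" "x \<noteq> y" for x y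
  proof -
    have h: "\<And>x y (w::real^3). x + y = 2 *\<^sub>R w \<Longrightarrow> (1/2) *\<^sub>R (x+y) = w" by (simp add: scaleR_scaleR)
    have e: "P1 + P2 = 2 *\<^sub>R u" "P1 + P3 = 2 *\<^sub>R v" "P1 + P4 = 2 *\<^sub>R c"
      "P2 + P3 = 2 *\<^sub>R (-c)" "P2 + P4 = 2 *\<^sub>R (-v)" "P3 + P4 = 2 *\<^sub>R (-u)"
      unfolding P1_def P2_def P3_def P4_def scaleR_2 by (simp_all add: algebra_simps)
    have e2: "P2 + P1 = 2 *\<^sub>R u" "P3 + P1 = 2 *\<^sub>R v" "P4 + P1 = 2 *\<^sub>R c"
      "P3 + P2 = 2 *\<^sub>R (-c)" "P4 + P2 = 2 *\<^sub>R (-v)" "P4 + P3 = 2 *\<^sub>R (-u)"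
      using e by (simp_all add: add.commute)
    show ?thesis using that h[OF e(1)] h[OF e(2)] h[OF e(3)] h[OF e(4)] h[OF e(5)] h[OF e(6)]
      h[OF e2(1)] h[OF e2(2)] h[OF e2(3)] h[OF e2(4)] h[OF e2(5)] h[OF e2(6)]
      by auto
  qed
  have "is_M_set S"
    unfolding is_M_set_def midpoint_set_def
  proof safe
    fix x y assume xy: "x \<in> S" "y \<in> S" "x \<noteq> y"
    then obtain x' y' where x': "x' \<in> {P1,P2,P3,P4}" "x = L x'" and y': "y' \<in> {P1,P2,P3,P4}" "y = L y'"
      unfolding S_def by blast
    have "x' \<noteq> y'" using xy x' y' by auto
    have "(1/2) *\<^sub>R (x + y) = L ((1/2) *\<^sub>R (x' + y'))"
      using lin x' y' by (simp add: linear_add linear_scale)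
    moreover have "norm (L w) = 1" if "w \<in> {u, -u, v, -v, c, -c}" for w
      using that u1 v1 c1 Lneg by auto
    ultimately show "norm ((1/2) *\<^sub>R (x + y)) = 1"
      using mid[OF x'(1) y'(1) \<open>x' \<noteq> y'\<close>] by metis
  next
    fix x assume "x \<in> S"
    then show "norm x > 1" unfolding S_def using n1 n2 n3 n4 by auto
  qed
  moreover have "finite S" unfolding S_def by simp
  ultimately have "enat (card S) \<le> m_const TYPE('a)"
    unfolding m_const_def by (intro Sup_upper) blast
  then show ?thesis using cardS by (simp add: numeral_eq_enat)
qed

theorem lemma4:
  assumes "\<exists>B :: 'a::real_normed_vector set. finite B \<and> span B = UNIV"
    and "dim (UNIV :: 'a set) \<ge> 3"
  shows "m_const TYPE('a) \<ge> 4"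
proof -
  obtain Bs :: "'a set" where Bs: "independent Bs" "card Bs = dim (UNIV :: 'a set)"
    using basis_exists[of "UNIV :: 'a set"] by blast
  have "3 \<le> card Bs" using assms(2) Bs(2) by simp
  then obtain T where T: "T \<subseteq> Bs" "card T = 3" "finite T"
    by (rule obtain_subset_with_card_n)
  have indT: "independent T" using independent_mono[OF Bs(1) T(1)] .
  obtain b1 b2 b3 where T3: "T = {b1,b2,b3}" "b1 \<noteq> b2" "b2 \<noteq> b3" "b1 \<noteq> b3"
    using T(2) unfolding card_3_iff by blast
  define L :: "real^3 \<Rightarrow> 'a" where "L x = x$1 *\<^sub>R b1 + x$2 *\<^sub>R b2 + x$3 *\<^sub>R b3" for x
  have lin: "linear L"
    by (rule linearI) (simp_all add: L_def scaleR_add_left scaleR_add_right)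
  have inj: "inj L"
  proof (rule injI)
    fix x y assume "L x = L y"
    define d where "d = x - y"
    have "L d = 0" unfolding d_def using \<open>L x = L y\<close> linear_diff[OF lin, of x y] by simp
    define cf where "cf v = (if v = b1 then d$1 else if v = b2 then d$2 else d$3)" for v
    have "(\<Sum>v\<in>T. cf v *\<^sub>R v) = L d"
      using T3 by (simp add: cf_def L_def)
    moreover have "\<forall>c. (\<Sum>v\<in>T. c v *\<^sub>R v) = 0 \<longrightarrow> (\<forall>v\<in>T. c v = 0)"
      using indT T(3) unfolding real_vector.independent_explicit_finite_subsets by blast
    ultimately have "\<forall>v\<in>T. cf v = 0"
      using \<open>L d = 0\<close> by simp
    then have "d$1 = 0" "d$2 = 0" "d$3 = 0" using T3 by (auto simp: cf_def split: if_splits)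
    then have "d = 0" by (simp add: vec_eq_iff forall_3)
    then show "x = y" unfolding d_def by simp
  qed
  show ?thesis by (rule main3[OF lin inj])
qed

end
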